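(* Let $\Omega \subset \mathbf{R}^{n+1}$ be a compact connected set with smooth mean convex boundary, and let $u \colon \Omega \to \mathbf{R}$ be a $C^2$ solution of the arrival time equation $$-1 = |\nabla u|\,\operatorname{div}\!\left(\frac{\nabla u}{|\nabla u|}\right)$$ which is constant on $\partial \Omega$ and satisfies $\sup u = 0$. Let $\mathcal{S} = \{x : \nabla u(x) = 0\}$ be its critical set. Let $\gamma$ be a gradient flow line of $u$ that limits to a point of $\mathcal{S}$, parametrized by arclength $s \ge 0$ (so $|\gamma_s| = 1$) with $\gamma(0) \in \mathcal{S}$ and $\gamma_s = -\frac{\nabla u}{|\nabla u|}$ for $s > 0$. Then for every $\Lambda > 1$, $$\lim_{s \to 0^+} \int_{s}^{\Lambda s} |\gamma_{ss}| \, ds = 0 .$$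
   Context: A gradient flow line of $u$ is a solution $x(t)$ of $x'(t) = \nabla u(x(t))$. The arclength parametrization $\gamma(s)$ traverses this curve with $s$ measured from the limit point $\gamma(0) \in \mathcal{S}$, so that increasing $s$ moves away from the critical set, and $\gamma_{ss}$ denotes the second derivative with respect to $s$. *)

theory Defs
  imports "HOL-Analysis.Analysis"
begin

definition grad :: "('a::euclidean_space \<Rightarrow> real) \<Rightarrow> 'a \<Rightarrow> 'a" where
  "grad f x = (\<Sum>i\<in>Basis. frechet_derivative f (at x) i *\<^sub>R i)"

definition divergence :: "('a::euclidean_space \<Rightarrow> 'a) \<Rightarrow> 'a \<Rightarrow> real" where
  "divergence F x = (\<Sum>i\<in>Basis. frechet_derivative F (at x) i \<bullet> i)"

fun dderivs :: "'a::euclidean_space list \<Rightarrow> ('a \<Rightarrow> real) \<Rightarrow> 'a \<Rightarrow> real" where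
  "dderivs [] f = f"
| "dderivs (v # vs) f = (\<lambda>x. frechet_derivative (dderivs vs f) (at x) v)"

definition C2_on :: "'a::euclidean_space set \<Rightarrow> ('a \<Rightarrow> real) \<Rightarrow> bool" where
  "C2_on U f \<longleftrightarrow> open U \<and>
     (\<forall>vs. length vs \<le> 1 \<longrightarrow> (\<forall>x\<in>U. dderivs vs f differentiable (at x))) \<and>
     (\<forall>v w. continuous_on U (dderivs [v, w] f))"

definition smooth_on :: "'a::euclidean_space set \<Rightarrow> ('a \<Rightarrow> real) \<Rightarrow> bool" where
  "smooth_on U f \<longleftrightarrow> open U \<and> (\<forall>vs. \<forall>x\<in>U. dderivs vs f differentiable (at x))"

text \<open>Omega has smooth mean convex boundary: near the boundary, Omega = {phi \<le> 0} for a
  smooth phi with nonvanishing gradient on the boundary, and the mean curvature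
  H = div(grad phi / |grad phi|) (w.r.t. the outward normal) is nonnegative on the boundary.\<close>
definition smooth_mean_convex_boundary :: "'a::euclidean_space set \<Rightarrow> bool" where
  "smooth_mean_convex_boundary \<Omega> \<longleftrightarrow>
     (\<exists>U \<phi>. open U \<and> frontier \<Omega> \<subseteq> U \<and> smooth_on U \<phi> \<and>
        \<Omega> \<inter> U = {x\<in>U. \<phi> x \<le> 0} \<and>
        (\<forall>x\<in>frontier \<Omega>. grad \<phi> x \<noteq> 0 \<and>
            divergence (\<lambda>y. grad \<phi> y /\<^sub>R norm (grad \<phi> y)) x \<ge> 0))"

end

theory Submission imports Defs begin

definition hess :: "('a::euclidean_space \<Rightarrow> real) \<Rightarrow> 'a \<Rightarrow> 'a \<Rightarrow> 'a" where
  "hess u x v = (\<Sum>i\<in>Basis. frechet_derivative (\<lambda>y. frechet_derivative u (at y) i) (at x) v *\<^sub>R i)"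

lemma linear_inner_sum: "linear f \<Longrightarrow> f v = (\<Sum>i\<in>Basis. f i *\<^sub>R i) \<bullet> v"
proof -
  assume l: "linear f"
  have "f v = f (\<Sum>i\<in>Basis. (v \<bullet> i) *\<^sub>R i)" by (simp add: euclidean_representation)
  also have "\<dots> = (\<Sum>i\<in>Basis. (v \<bullet> i) *\<^sub>R f i)" using l by (simp add: linear_sum linear_scale)
  finally show ?thesis by (simp add: inner_sum_right inner_commute mult.commute)
qed

lemma C2_u_deriv: assumes "C2_on U u" "x \<in> U"
  shows "(u has_derivative (\<lambda>v. grad u x \<bullet> v)) (at x)"
proof -
  have "length ([]::'a list) \<le> 1" by simp
  then have "dderivs [] u differentiable (at x)" using assms unfolding C2_on_def by blast
  then have "u differentiable (at x)" by simp
  then have d: "(u has_derivative frechet_derivative u (at x)) (at x)" by (simp add: frechet_derivative_works)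
  then have "linear (frechet_derivative u (at x))" using has_derivative_linear by blast
  then have "frechet_derivative u (at x) = (\<lambda>v. grad u x \<bullet> v)"
    unfolding grad_def using linear_inner_sum by blast
  with d show ?thesis by simp
qed

lemma C2_grad_deriv: assumes "C2_on U u" "x \<in> U"
  shows "(grad u has_derivative hess u x) (at x)"
proof -
  have "dderivs [i] u differentiable (at x)" for i
  proof -
    have "length [i] \<le> 1" by simp
    then show ?thesis using assms unfolding C2_on_def by blast
  qed
  then have "(\<lambda>y. frechet_derivative u (at y) i) differentiable (at x)" for i by simp
  then have d: "((\<lambda>y. frechet_derivative u (at y) i) has_derivative
     frechet_derivative (\<lambda>y. frechet_derivative u (at y) i) (at x)) (at x)" for i
    by (simp add: frechet_derivative_works)
  have "((\<lambda>y. \<Sum>i\<in>Basis. frechet_derivative u (at y) i *\<^sub>R i) has_derivative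
      (\<lambda>v. \<Sum>i\<in>Basis. frechet_derivative (\<lambda>y. frechet_derivative u (at y) i) (at x) v *\<^sub>R i)) (at x)"
    by (intro has_derivative_sum has_derivative_scaleR_left d)
  then show ?thesis unfolding grad_def[abs_def] hess_def[abs_def] by simp
qed

lemma C2_hess_cont: assumes "C2_on U u"
  shows "continuous_on U (\<lambda>y. hess u y v)"
proof -
  have "continuous_on U (dderivs [v,i] u)" for i
    using assms unfolding C2_on_def by blast
  then have "continuous_on U (\<lambda>y. frechet_derivative (\<lambda>y. frechet_derivative u (at y) i) (at y) v)" for i
    by simp
  then show ?thesis unfolding hess_def by (intro continuous_intros) auto
qed

lemma line_deriv_f:
  assumes "(f has_derivative (\<lambda>v. g \<bullet> v)) (at (a + s *\<^sub>R b))"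
  shows "((\<lambda>t. f (a + t *\<^sub>R b)) has_real_derivative (g \<bullet> b)) (at s)"
proof -
  have "((\<lambda>t. a + t *\<^sub>R b) has_derivative (\<lambda>t. t *\<^sub>R b)) (at s)"
    by (intro derivative_eq_intros) auto
  from has_derivative_compose[OF this assms]
  have "((\<lambda>t. f (a + t *\<^sub>R b)) has_derivative (\<lambda>t. g \<bullet> (t *\<^sub>R b))) (at s)" .
  then show ?thesis by (rule has_derivative_imp_has_field_derivative) simp
qed

lemma line_deriv_g:
  assumes "(g has_derivative H) (at (a + s *\<^sub>R b))"
  shows "((\<lambda>t. g (a + t *\<^sub>R b) \<bullet> c) has_real_derivative (H b \<bullet> c)) (at s)"
proof -
  have l: "linear H" using assms has_derivative_linear by blast
  have "((\<lambda>t. a + t *\<^sub>R b) has_derivative (\<lambda>t. t *\<^sub>R b)) (at s)"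
    by (intro derivative_eq_intros) auto
  from has_derivative_compose[OF this assms]
  have "((\<lambda>t. g (a + t *\<^sub>R b)) has_derivative (\<lambda>t. H (t *\<^sub>R b))) (at s)" .
  then have "((\<lambda>t. g (a + t *\<^sub>R b) \<bullet> c) has_derivative (\<lambda>t. H (t *\<^sub>R b) \<bullet> c)) (at s)"
    by (intro derivative_eq_intros) auto
  then show ?thesis by (rule has_derivative_imp_has_field_derivative) (simp add: linear_scale[OF l])
qed

lemma clairaut:
  fixes f :: "'a::euclidean_space \<Rightarrow> real"
  assumes U: "open U" "x \<in> U"
    and fd: "\<And>y. y\<in>U \<Longrightarrow> (f has_derivative (\<lambda>v. g y \<bullet> v)) (at y)"
    and gd: "\<And>y. y\<in>U \<Longrightarrow> (g has_derivative H y) (at y)"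
    and Hc: "\<And>v. continuous_on U (\<lambda>y. H y v)"
  shows "H x v \<bullet> w = H x w \<bullet> v"
proof -
  obtain r where r: "r > 0" "ball x r \<subseteq> U" using U open_contains_ball by blast
  have key: "\<exists>\<xi>. norm (\<xi> - x) \<le> h * (norm v + norm w) \<and>
      f (x + h *\<^sub>R v + h *\<^sub>R w) - f (x + h *\<^sub>R v) - f (x + h *\<^sub>R w) + f x = h\<^sup>2 * (H \<xi> w \<bullet> v)"
    if h: "0 < h" "h * (norm v + norm w) < r" for v w h
  proof -
    have inb: "x + s *\<^sub>R v + t *\<^sub>R w \<in> U" if "0 \<le> s" "s \<le> h" "0 \<le> t" "t \<le> h" for s t
    proof -
      have "norm (s *\<^sub>R v + t *\<^sub>R w) \<le> s * norm v + t * norm w"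
        using that by (metis abs_of_nonneg norm_scaleR norm_triangle_ineq)
      also have "\<dots> \<le> h * (norm v + norm w)" using that
        by (simp add: distrib_left add_mono mult_right_mono)
      finally have "norm (s *\<^sub>R v + t *\<^sub>R w) < r" using h by simp
      then have "dist x (x + (s *\<^sub>R v + t *\<^sub>R w)) < r"
        by (metis add_diff_cancel_left' dist_commute dist_norm)
      then show ?thesis using r by (auto simp: add.assoc)
    qed
    have nb: "norm (s *\<^sub>R v + t *\<^sub>R w) \<le> h * (norm v + norm w)" if "0 \<le> s" "s \<le> h" "0 \<le> t" "t \<le> h" for s t
    proof -
      have "norm (s *\<^sub>R v + t *\<^sub>R w) \<le> s * norm v + t * norm w"
        using that by (metis abs_of_nonneg norm_scaleR norm_triangle_ineq)
      also have "\<dots> \<le> h * (norm v + norm w)" using that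
        by (simp add: distrib_left add_mono mult_right_mono)
      finally show ?thesis .
    qed
    define a1 where "a1 = x + h *\<^sub>R w"
    have "DERIV (\<lambda>s. f (a1 + s *\<^sub>R v) - f (x + s *\<^sub>R v)) s :> (g (a1 + s *\<^sub>R v) \<bullet> v - g (x + s *\<^sub>R v) \<bullet> v)"
      if "0 \<le> s" "s \<le> h" for s
    proof (intro DERIV_diff line_deriv_f fd)
      show "a1 + s *\<^sub>R v \<in> U" using inb[of s h] that h unfolding a1_def by (simp add: add_ac)
      show "x + s *\<^sub>R v \<in> U" using inb[of s 0] that h by simp
    qed
    from MVT2[OF h(1) this] obtain s1 where s1: "0 < s1" "s1 < h"
      "f (a1 + h *\<^sub>R v) - f (x + h *\<^sub>R v) - (f (a1 + 0 *\<^sub>R v) - f (x + 0 *\<^sub>R v)) =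
        (h - 0) * (g (a1 + s1 *\<^sub>R v) \<bullet> v - g (x + s1 *\<^sub>R v) \<bullet> v)" by blast
    define b0 where "b0 = x + s1 *\<^sub>R v"
    have "DERIV (\<lambda>t. g (b0 + t *\<^sub>R w) \<bullet> v) t :> (H (b0 + t *\<^sub>R w) w \<bullet> v)"
      if "0 \<le> t" "t \<le> h" for t
    proof -
      have "b0 + t *\<^sub>R w \<in> U" using inb[of s1 t] that s1 unfolding b0_def by simp
      then show ?thesis by (intro line_deriv_g gd)
    qed
    from MVT2[OF h(1) this] obtain t1 where t1: "0 < t1" "t1 < h"
      "g (b0 + h *\<^sub>R w) \<bullet> v - g (b0 + 0 *\<^sub>R w) \<bullet> v = (h - 0) * (H (b0 + t1 *\<^sub>R w) w \<bullet> v)" by blast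
    show ?thesis
    proof (intro exI conjI)
      show "norm (b0 + t1 *\<^sub>R w - x) \<le> h * (norm v + norm w)"
        using nb[of s1 t1] s1 t1 unfolding b0_def by simp
      have e1: "a1 + s1 *\<^sub>R v = b0 + h *\<^sub>R w" unfolding a1_def b0_def by (simp add: add_ac)
      show "f (x + h *\<^sub>R v + h *\<^sub>R w) - f (x + h *\<^sub>R v) - f (x + h *\<^sub>R w) + f x = h\<^sup>2 * (H (b0 + t1 *\<^sub>R w) w \<bullet> v)"
        using s1(3) t1(3) unfolding e1 by (simp add: a1_def b0_def add_ac power2_eq_square algebra_simps)
    qed
  qed
  show ?thesis
  proof (rule ccontr)
    assume ne: "H x v \<bullet> w \<noteq> H x w \<bullet> v"
    define e where "e = \<bar>H x v \<bullet> w - H x w \<bullet> v\<bar> / 2"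
    have e: "e > 0" using ne by (simp add: e_def)
    have c1: "isCont (\<lambda>y. H y w \<bullet> v) x" "isCont (\<lambda>y. H y v \<bullet> w) x"
      using Hc U by (auto intro!: continuous_intros simp: continuous_on_eq_continuous_at)
    obtain d1 where d1: "d1 > 0" "\<And>y. dist y x < d1 \<Longrightarrow> dist (H y w \<bullet> v) (H x w \<bullet> v) < e"
      using c1(1) e unfolding continuous_at_eps_delta by blast
    obtain d2 where d2: "d2 > 0" "\<And>y. dist y x < d2 \<Longrightarrow> dist (H y v \<bullet> w) (H x v \<bullet> w) < e"
      using c1(2) e unfolding continuous_at_eps_delta by blast
    define K where "K = norm v + norm w + 1"
    have K: "K > 0" by (simp add: K_def add_nonneg_pos)
    define h where "h = min r (min d1 d2) / (2 * K)"
    have h: "h > 0" using r d1 d2 K by (simp add: h_def)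
    have hK: "h * K < min r (min d1 d2)" using r d1 d2 K by (simp add: h_def min_def)
    have hK2: "h * (norm v + norm w) \<le> h * K" using h by (simp add: K_def)
    have hd1: "h * K < d1" "h * K < d2" "h * K < r" using hK by auto
    have hr: "h * (norm v + norm w) < r" using hK2 hd1 by linarith
    then have hr': "h * (norm w + norm v) < r" by (simp add: add.commute)
    obtain \<xi> where xi: "norm (\<xi> - x) \<le> h * (norm v + norm w)"
      "f (x + h *\<^sub>R v + h *\<^sub>R w) - f (x + h *\<^sub>R v) - f (x + h *\<^sub>R w) + f x = h\<^sup>2 * (H \<xi> w \<bullet> v)"
      using key[of h v w] h hr by blast
    obtain \<eta> where eta: "norm (\<eta> - x) \<le> h * (norm w + norm v)"
      "f (x + h *\<^sub>R w + h *\<^sub>R v) - f (x + h *\<^sub>R w) - f (x + h *\<^sub>R v) + f x = h\<^sup>2 * (H \<eta> v \<bullet> w)"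
      using key[of h w v] h hr' by blast
    have "h\<^sup>2 * (H \<xi> w \<bullet> v) = h\<^sup>2 * (H \<eta> v \<bullet> w)" 
    proof -
      have "x + h *\<^sub>R w + h *\<^sub>R v = x + h *\<^sub>R v + h *\<^sub>R w" by (simp add: add_ac)
      then have "f (x + h *\<^sub>R w + h *\<^sub>R v) = f (x + h *\<^sub>R v + h *\<^sub>R w)" by (rule arg_cong)
      then show ?thesis using xi(2) eta(2) by linarith
    qed
    then have eq: "H \<xi> w \<bullet> v = H \<eta> v \<bullet> w" using h by simp
    have "norm (\<xi> - x) < d1" using xi(1) hd1 hK2 by linarith
    then have "dist \<xi> x < d1" by (simp add: dist_norm)
    then have a: "dist (H \<xi> w \<bullet> v) (H x w \<bullet> v) < e" by (rule d1(2))
    have "norm (\<eta> - x) < d2" using eta(1) hd1 hK2 by (simp add: add.commute)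
    then have "dist \<eta> x < d2" by (simp add: dist_norm)
    then have b: "dist (H \<eta> v \<bullet> w) (H x v \<bullet> w) < e" by (rule d2(2))
    from a b eq show False unfolding e_def dist_real_def by (simp add: abs_if split: if_splits)
  qed
qed

lemma grad_deriv_diff:
  assumes "f differentiable (at x)"
  shows "(f has_derivative (\<lambda>v. grad f x \<bullet> v)) (at x)"
proof -
  have d: "(f has_derivative frechet_derivative f (at x)) (at x)" using assms by (simp add: frechet_derivative_works)
  then have "linear (frechet_derivative f (at x))" using has_derivative_linear by blast
  then have "frechet_derivative f (at x) = (\<lambda>v. grad f x \<bullet> v)"
    unfolding grad_def using linear_inner_sum by blast
  with d show ?thesis by simp
qed

lemma norm_comp_deriv:
  fixes g :: "'b::real_normed_vector \<Rightarrow> 'c::real_inner"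
  assumes "(g has_derivative G) (at x within S)" "g x \<noteq> 0"
  shows "((\<lambda>y. norm (g y)) has_derivative (\<lambda>v. (g x /\<^sub>R norm (g x)) \<bullet> G v)) (at x within S)"
proof -
  have "(norm has_derivative (\<lambda>h. sgn (g x) \<bullet> h)) (at (g x))"
    using has_derivative_norm[OF assms(2)] by (simp add: inner_commute)
  from has_derivative_compose[OF assms(1) has_derivative_at_withinI[OF this]]
  show ?thesis by (simp add: sgn_div_norm divide_inverse_commute)
qed

lemma F_deriv:
  fixes g :: "'a::euclidean_space \<Rightarrow> 'a"
  assumes "(g has_derivative G) (at x within S)" "g x \<noteq> 0"
  shows "((\<lambda>y. g y /\<^sub>R norm (g y)) has_derivative
     (\<lambda>v. (G v - ((g x /\<^sub>R norm (g x)) \<bullet> G v) *\<^sub>R (g x /\<^sub>R norm (g x))) /\<^sub>R norm (g x))) (at x within S)"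
proof -
  have nz: "norm (g x) \<noteq> 0" using assms by simp
  have "((\<lambda>y. inverse (norm (g y)) *\<^sub>R g y) has_derivative
     (\<lambda>v. inverse (norm (g x)) *\<^sub>R G v + (- (inverse (norm (g x)) * ((g x /\<^sub>R norm (g x)) \<bullet> G v) * inverse (norm (g x)))) *\<^sub>R g x)) (at x within S)"
  proof (rule has_derivative_scaleR)
    have nd: "((\<lambda>y. norm (g y)) has_derivative (\<lambda>v. (g x /\<^sub>R norm (g x)) \<bullet> G v)) (at x within S)"
      by (rule norm_comp_deriv[OF assms])
    show "((\<lambda>y. inverse (norm (g y))) has_derivative (\<lambda>v. - (inverse (norm (g x)) * ((g x /\<^sub>R norm (g x)) \<bullet> G v) * inverse (norm (g x))))) (at x within S)"
      using Deriv.has_derivative_inverse[where f="\<lambda>y. norm (g y)", OF _ nd] nz by simp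
  qed (rule assms)
  moreover have "(\<lambda>v. inverse (norm (g x)) *\<^sub>R G v + (- (inverse (norm (g x)) * ((g x /\<^sub>R norm (g x)) \<bullet> G v) * inverse (norm (g x)))) *\<^sub>R g x)
     = (\<lambda>v. (G v - ((g x /\<^sub>R norm (g x)) \<bullet> G v) *\<^sub>R (g x /\<^sub>R norm (g x))) /\<^sub>R norm (g x))"
    using nz by (auto simp: fun_eq_iff algebra_simps scaleR_diff_right)
  ultimately show ?thesis by simp
qed

lemma div_formula:
  fixes g :: "'a::euclidean_space \<Rightarrow> 'a"
  assumes "(g has_derivative G) (at x)" "g x \<noteq> 0"
  shows "divergence (\<lambda>y. g y /\<^sub>R norm (g y)) x =
    ((\<Sum>i\<in>Basis. G i \<bullet> i) - (g x /\<^sub>R norm (g x)) \<bullet> G (g x /\<^sub>R norm (g x))) / norm (g x)"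
proof -
  define n where "n = g x /\<^sub>R norm (g x)"
  have l: "linear G" using assms has_derivative_linear by blast
  have fd: "frechet_derivative (\<lambda>y. g y /\<^sub>R norm (g y)) (at x) =
     (\<lambda>v. (G v - (n \<bullet> G v) *\<^sub>R n) /\<^sub>R norm (g x))"
    using frechet_derivative_at[OF F_deriv[OF assms]] unfolding n_def by simp
  have "(\<Sum>i\<in>Basis. (n \<bullet> G i) * (n \<bullet> i)) = n \<bullet> G n"
  proof -
    have "G n = (\<Sum>i\<in>Basis. (n \<bullet> i) *\<^sub>R G i)"
      using l by (metis (no_types, lifting) euclidean_representation linear_scale linear_sum sum.cong)
    then show ?thesis by (simp add: inner_sum_right mult.commute)
  qed
  then show ?thesis
    unfolding divergence_def fd n_def[symmetric]
    by (simp add: inner_diff_left sum_distrib_left[symmetric] sum_subtractf divide_inverse_commute)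
qed

lemma lin_expand: "linear T \<Longrightarrow> T z = (\<Sum>i\<in>Basis. (z \<bullet> i) *\<^sub>R T i)"
  by (metis (no_types, lifting) euclidean_representation linear_scale linear_sum sum.cong)

lemma lin_diff_bound:
  fixes S T :: "'a::euclidean_space \<Rightarrow> 'b::real_normed_vector"
  assumes "linear S" "linear T" "norm z \<le> 1"
  shows "norm (S z - T z) \<le> (\<Sum>i\<in>Basis. norm (S i - T i))"
proof -
  have "S z - T z = (\<Sum>i\<in>Basis. (z \<bullet> i) *\<^sub>R (S i - T i))"
    using lin_expand[OF assms(1), of z] lin_expand[OF assms(2), of z]
    by (simp add: sum_subtractf scaleR_diff_right)
  also have "norm \<dots> \<le> (\<Sum>i\<in>Basis. norm ((z \<bullet> i) *\<^sub>R (S i - T i)))" by (rule norm_sum)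
  also have "\<dots> \<le> (\<Sum>i\<in>Basis. norm (S i - T i))"
  proof (rule sum_mono)
    fix i :: 'a assume i: "i \<in> Basis"
    have "\<bar>z \<bullet> i\<bar> \<le> 1" using Basis_le_norm[OF i, of z] assms(3) by linarith
    then show "norm ((z \<bullet> i) *\<^sub>R (S i - T i)) \<le> norm (S i - T i)"
      by (simp add: mult_left_le_one_le)
  qed
  finally show ?thesis .
qed

lemma quad_open_zero:
  fixes A :: "'a::euclidean_space \<Rightarrow> 'a"
  assumes l: "linear A" and W: "open W" "v0 \<in> W"
    and q0: "\<And>v. v \<in> W \<Longrightarrow> A v \<bullet> A (A v) = m * (A v \<bullet> A v)"
  shows "A d \<bullet> A (A d) = m * (A d \<bullet> A d)"
proof -
  define q where "q v = A v \<bullet> A (A v) - m * (A v \<bullet> A v)" for v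
  obtain r where r: "r > 0" "ball v0 r \<subseteq> W" using W open_contains_ball by blast
  define t where "t = r / (2 * (norm d + 1))"
  have t: "t > 0" using r by (simp add: t_def add_nonneg_pos)
  have "t * norm d < r"
  proof -
    have "t * norm d \<le> t * (norm d + 1)" using t by simp
    also have "\<dots> = r / 2"
    proof -
      have "norm d + 1 > 0" by (simp add: add_nonneg_pos)
      then show ?thesis unfolding t_def by (simp add: field_simps)
    qed
    finally show ?thesis using r by linarith
  qed
  then have "v0 + t *\<^sub>R d \<in> W" "v0 - t *\<^sub>R d \<in> W" using r t
    by (auto simp: dist_norm subset_iff)
  then have z: "q (v0 + t *\<^sub>R d) = 0" "q (v0 - t *\<^sub>R d) = 0" "q v0 = 0"
    using q0 W by (auto simp: q_def)
  have "q (v0 + t *\<^sub>R d) + q (v0 - t *\<^sub>R d) = 2 * q v0 + 2 * t\<^sup>2 * q d"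
    unfolding q_def using l
    by (simp add: linear_add linear_diff linear_scale inner_add_left inner_add_right
        inner_diff_left inner_diff_right algebra_simps power2_eq_square)
  then have "t\<^sup>2 * q d = 0" using z by simp
  then have "q d = 0" using t by simp
  then show ?thesis by (simp add: q_def)
qed

lemma sym_alg:
  fixes A :: "'a::euclidean_space \<Rightarrow> 'a"
  assumes l: "linear A" and sym: "\<And>v w. A v \<bullet> w = A w \<bullet> v"
    and q: "\<And>v. A v \<bullet> A (A v) = m * (A v \<bullet> A v)"
  shows "A (A x) = m *\<^sub>R A x"
proof -
  define b where "b x y = A x \<bullet> A (A y) - m * (A x \<bullet> A y)" for x y
  have bsym: "b x y = b y x" for x y
  proof -
    have "A x \<bullet> A (A y) = A (A x) \<bullet> A y" using sym[of "A y" "A x"] by (simp add: inner_commute)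
    also have "\<dots> = A y \<bullet> A (A x)" by (simp add: inner_commute)
    finally show ?thesis by (simp add: b_def inner_commute)
  qed
  have bz: "b x y = 0" for x y
  proof -
    have "b (x + y) (x + y) = b x x + b y y + b x y + b y x"
      unfolding b_def using l
      by (simp add: linear_add inner_add_left inner_add_right algebra_simps)
    then show ?thesis using q[of x] q[of y] q[of "x + y"] bsym[of x y] by (simp add: b_def)
  qed
  have A3: "A (A (A x)) = m *\<^sub>R A (A x)"
  proof -
    have "(A (A (A x)) - m *\<^sub>R A (A x)) \<bullet> y = 0" for y
    proof -
      have e1: "A x \<bullet> A (A y) = A (A (A x)) \<bullet> y"
      proof -
        have "A x \<bullet> A (A y) = A (A x) \<bullet> A y" using sym[of "A y" "A x"] by (simp add: inner_commute)
        also have "\<dots> = A y \<bullet> A (A x)" by (simp add: inner_commute)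
        also have "\<dots> = A (A (A x)) \<bullet> y" using sym[of y "A (A x)"] by simp
        finally show ?thesis .
      qed
      have e2: "A x \<bullet> A y = A (A x) \<bullet> y"
        using sym[of y "A x"] by (simp add: inner_commute)
      show ?thesis using bz[of x y] unfolding b_def e1 e2 by (simp add: inner_diff_left)
    qed
    then have "(A (A (A x)) - m *\<^sub>R A (A x)) \<bullet> (A (A (A x)) - m *\<^sub>R A (A x)) = 0" by blast
    then show ?thesis by simp
  qed
  define z where "z = A (A x) - m *\<^sub>R A x"
  have "z \<bullet> A (A x) = 0"
  proof -
    have "A (A x) \<bullet> A (A x) = A (A (A x)) \<bullet> A x" using sym[of "A x" "A (A x)"] by simp
    also have "\<dots> = m * (A (A x) \<bullet> A x)" using A3 by simp
    finally have h: "A (A x) \<bullet> A (A x) = m * (A (A x) \<bullet> A x)" .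
    have "A x \<bullet> A (A x) = A (A x) \<bullet> A x" by (rule inner_commute)
    then show ?thesis unfolding z_def inner_diff_left inner_scaleR_left h by simp
  qed
  moreover have "z \<bullet> A x = 0"
  proof -
    have "A (A x) \<bullet> A x = A x \<bullet> A (A x)" by (rule inner_commute)
    then show ?thesis unfolding z_def inner_diff_left inner_scaleR_left using q[of x] by simp
  qed
  ultimately have "z \<bullet> z = 0" unfolding z_def[of] by (simp add: inner_diff_right)
  then show ?thesis unfolding z_def by simp
qed

lemma W_quad:
  fixes g :: "'a::euclidean_space \<Rightarrow> 'a" and H :: "'a \<Rightarrow> 'a \<Rightarrow> 'a"
  assumes U: "open U" "x0 \<in> U"
   and gd: "\<And>y. y\<in>U \<Longrightarrow> (g has_derivative H y) (at y)"
   and Hc: "\<And>v. continuous_on U (\<lambda>y. H y v)"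
   and pde: "\<And>y. y\<in>\<Omega> \<Longrightarrow> g y \<noteq> 0 \<Longrightarrow>
      (g y /\<^sub>R norm (g y)) \<bullet> H y (g y /\<^sub>R norm (g y)) = (\<Sum>i\<in>Basis. H y i \<bullet> i) + 1"
   and g0: "g x0 = 0"
   and ev: "\<forall>\<^sub>F \<tau> in at_right 0. x0 + \<tau> *\<^sub>R v \<in> \<Omega>"
  shows "H x0 v \<bullet> H x0 (H x0 v) = ((\<Sum>i\<in>Basis. H x0 i \<bullet> i) + 1) * (H x0 v \<bullet> H x0 v)"
proof -
  define A where "A = H x0"
  define m where "m = (\<Sum>i\<in>Basis. H x0 i \<bullet> i) + 1"
  have lA: "linear A" unfolding A_def using gd[OF U(2)] has_derivative_linear by blast
  have lH: "linear (H z)" if "z \<in> U" for z using gd[OF that] has_derivative_linear by blast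
  show ?thesis
  proof (cases "A v = 0")
    case True
    then have "A (A v) = 0" using lA linear_0 by auto
    then show ?thesis using True by (simp add: A_def)
  next
    case False
    define y where "y \<tau> = x0 + \<tau> *\<^sub>R v" for \<tau> :: real
    define q where "q \<tau> = g (y \<tau>) /\<^sub>R \<tau>" for \<tau>
    have yl: "(y \<longlongrightarrow> x0) (at_right 0)" unfolding y_def
      by (rule tendsto_eq_intros refl | simp)+
    have yU: "\<forall>\<^sub>F \<tau> in at_right 0. y \<tau> \<in> U" using topological_tendstoD[OF yl U(1) U(2)] .
    have pos: "\<forall>\<^sub>F \<tau> in at_right 0. (0::real) < \<tau>" by (rule eventually_at_right_less)
    have ql: "(q \<longlongrightarrow> A v) (at_right 0)"
    proof -
      have d1: "((\<lambda>\<tau>. x0 + \<tau> *\<^sub>R v) has_derivative (\<lambda>\<tau>. \<tau> *\<^sub>R v)) (at 0 within {0<..})"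
        by (rule derivative_eq_intros refl | simp)+
      have d2: "(g has_derivative A) (at (x0 + 0 *\<^sub>R v) within (\<lambda>\<tau>. x0 + \<tau> *\<^sub>R v) ` {0<..})"
        unfolding A_def using gd[OF U(2)] by (simp add: has_derivative_at_withinI)
      from has_derivative_in_compose[OF d1 d2]
      have "((\<lambda>\<tau>. g (y \<tau>)) has_derivative (\<lambda>\<tau>. \<tau> *\<^sub>R A v)) (at 0 within {0<..})"
        by (simp add: y_def o_def linear_scale[OF lA])
      then have "((\<lambda>\<tau>. norm ((g (y \<tau>) - g (y 0)) - (\<tau> - 0) *\<^sub>R A v) / norm (\<tau> - 0)) \<longlongrightarrow> 0) (at_right 0)"
        unfolding has_derivative_iff_norm by simp
      moreover have "\<forall>\<^sub>F \<tau> in at_right 0. norm ((g (y \<tau>) - g (y 0)) - (\<tau> - 0) *\<^sub>R A v) / norm (\<tau> - 0) = norm (q \<tau> - A v)"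
        using pos
      proof eventually_elim
        case (elim \<tau>)
        have "g (y \<tau>) - \<tau> *\<^sub>R A v = \<tau> *\<^sub>R (q \<tau> - A v)" using elim by (simp add: q_def scaleR_diff_right)
        then show ?case using elim g0 by (simp add: y_def)
      qed
      ultimately have "((\<lambda>\<tau>. norm (q \<tau> - A v)) \<longlongrightarrow> 0) (at_right 0)"
        by (rule Lim_transform_eventually)
      then show ?thesis by (rule LIM_zero_cancel[OF tendsto_norm_zero_cancel])
    qed
    have qnz: "\<forall>\<^sub>F \<tau> in at_right 0. q \<tau> \<noteq> 0" by (rule tendsto_imp_eventually_ne[OF ql False])
    define e where "e = A v /\<^sub>R norm (A v)"
    define n where "n \<tau> = q \<tau> /\<^sub>R norm (q \<tau>)" for \<tau>
    have nl: "(n \<longlongrightarrow> e) (at_right 0)" unfolding n_def e_def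
      using False by (intro tendsto_intros ql) simp
    have geq: "\<forall>\<^sub>F \<tau> in at_right 0. g (y \<tau>) \<noteq> 0 \<and> g (y \<tau>) /\<^sub>R norm (g (y \<tau>)) = n \<tau>"
      using qnz pos
    proof eventually_elim
      case (elim \<tau>)
      have gq: "g (y \<tau>) = \<tau> *\<^sub>R q \<tau>" using elim by (simp add: q_def)
      show ?case using elim unfolding gq n_def by simp
    qed
    have Hl: "((\<lambda>\<tau>. H (y \<tau>) i) \<longlongrightarrow> A i) (at_right 0)" for i
      unfolding A_def by (rule continuous_on_tendsto_compose[OF Hc yl U(2) yU])
    have trl: "((\<lambda>\<tau>. (\<Sum>i\<in>Basis. H (y \<tau>) i \<bullet> i) + 1) \<longlongrightarrow> m) (at_right 0)"
      unfolding m_def A_def[symmetric] by (intro tendsto_intros Hl)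
    have L1: "((\<lambda>\<tau>. \<Sum>i\<in>Basis. (n \<tau> \<bullet> i) * (n \<tau> \<bullet> H (y \<tau>) i)) \<longlongrightarrow> (\<Sum>i\<in>Basis. (e \<bullet> i) * (e \<bullet> A i))) (at_right 0)"
      by (intro tendsto_intros Hl nl)
    have L2: "(\<Sum>i\<in>Basis. (e \<bullet> i) * (e \<bullet> A i)) = e \<bullet> A e"
      using lin_expand[OF lA, of e] by (simp add: inner_sum_right)
    have L3: "\<forall>\<^sub>F \<tau> in at_right 0. (\<Sum>i\<in>Basis. (n \<tau> \<bullet> i) * (n \<tau> \<bullet> H (y \<tau>) i)) = (\<Sum>i\<in>Basis. H (y \<tau>) i \<bullet> i) + 1"
      using yU geq ev
    proof eventually_elim
      case (elim \<tau>)
      have "n \<tau> \<bullet> H (y \<tau>) (n \<tau>) = (\<Sum>i\<in>Basis. (n \<tau> \<bullet> i) * (n \<tau> \<bullet> H (y \<tau>) i))"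
        using lin_expand[OF lH[OF elim(1)], of "n \<tau>"] by (simp add: inner_sum_right)
      moreover have "n \<tau> \<bullet> H (y \<tau>) (n \<tau>) = (\<Sum>i\<in>Basis. H (y \<tau>) i \<bullet> i) + 1"
      proof -
        have e1: "g (y \<tau>) \<noteq> 0" "g (y \<tau>) /\<^sub>R norm (g (y \<tau>)) = n \<tau>" using elim by auto
        have "y \<tau> \<in> \<Omega>" using elim by (simp add: y_def)
        from pde[OF this e1(1)] show ?thesis unfolding e1(2) .
      qed
      ultimately show ?case by simp
    qed
    have "((\<lambda>\<tau>. (\<Sum>i\<in>Basis. H (y \<tau>) i \<bullet> i) + 1) \<longlongrightarrow> e \<bullet> A e) (at_right 0)"
      using Lim_transform_eventually[OF L1 L3] unfolding L2 .
    from tendsto_unique[OF trivial_limit_at_right_real this trl]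
    have eA: "e \<bullet> A e = m" .
    have "e \<bullet> A e = (A v \<bullet> A (A v)) / (norm (A v))\<^sup>2"
      unfolding e_def using lA by (simp add: linear_scale power2_eq_square divide_inverse_commute)
    then have "A v \<bullet> A (A v) = m * (norm (A v))\<^sup>2" using eA False by (simp add: field_simps)
    then show ?thesis by (simp add: A_def m_def power2_norm_eq_inner)
  qed
qed

lemma kappa_lim:
  fixes A :: "'a::euclidean_space \<Rightarrow> 'a" and Ht :: "real \<Rightarrow> 'a \<Rightarrow> 'a"
  assumes lA: "linear A" and key: "\<And>n. A n \<bullet> A n = m * (n \<bullet> A n)"
   and lin: "\<forall>\<^sub>F t in F. linear (Ht t)"
   and HtoA: "\<And>i. ((\<lambda>t. Ht t i) \<longlongrightarrow> A i) F"
   and unit: "\<forall>\<^sub>F t in F. norm (nt t) = 1"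
   and pde: "\<forall>\<^sub>F t in F. nt t \<bullet> Ht t (nt t) = trt t"
   and trl: "(trt \<longlongrightarrow> m) F"
  shows "((\<lambda>t. norm (Ht t (nt t) - (nt t \<bullet> Ht t (nt t)) *\<^sub>R nt t)) \<longlongrightarrow> 0) F"
proof -
  define E where "E t = (\<Sum>i\<in>Basis. norm (Ht t i - A i))" for t
  have El: "(E \<longlongrightarrow> 0) F"
  proof -
    have "(E \<longlongrightarrow> (\<Sum>i\<in>(Basis::'a set). norm (A i - A i))) F"
      unfolding E_def by (intro tendsto_intros HtoA)
    then show ?thesis by simp
  qed
  define c where "c t = nt t \<bullet> A (nt t)" for t
  have Eb: "\<forall>\<^sub>F t in F. norm (Ht t (nt t) - A (nt t)) \<le> E t"
    using lin unit
  proof eventually_elim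
    case (elim t)
    then show ?case unfolding E_def by (intro lin_diff_bound lA) auto
  qed
  have cl: "(c \<longlongrightarrow> m) F"
  proof -
    have "((\<lambda>t. c t - trt t) \<longlongrightarrow> 0) F"
    proof (rule Lim_null_comparison[OF _ El])
      show "\<forall>\<^sub>F t in F. norm (c t - trt t) \<le> E t"
        using Eb unit pde
      proof eventually_elim
        case (elim t)
        have "c t - trt t = nt t \<bullet> (A (nt t) - Ht t (nt t))"
          using elim by (simp add: c_def inner_diff_right)
        also have "norm \<dots> \<le> norm (nt t) * norm (A (nt t) - Ht t (nt t))"
          using Cauchy_Schwarz_ineq2 by simp
        also have "\<dots> = norm (Ht t (nt t) - A (nt t))" using elim by (simp add: norm_minus_commute)
        finally show ?case using elim by linarith
      qed
    qed
    then have "((\<lambda>t. (c t - trt t) + trt t) \<longlongrightarrow> 0 + m) F" by (intro tendsto_intros trl)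
    then show ?thesis by simp
  qed
  define R where "R t = sqrt (m * c t - (c t)\<^sup>2)" for t
  have Rl: "(R \<longlongrightarrow> 0) F"
  proof -
    have "(R \<longlongrightarrow> sqrt (m * m - m\<^sup>2)) F" unfolding R_def by (intro tendsto_intros cl)
    then show ?thesis by (simp add: power2_eq_square)
  qed
  have Rb: "\<forall>\<^sub>F t in F. norm (A (nt t) - c t *\<^sub>R nt t) = R t"
    using unit
  proof eventually_elim
    case (elim t)
    have "(norm (A (nt t) - c t *\<^sub>R nt t))\<^sup>2 = A (nt t) \<bullet> A (nt t) - 2 * c t * (nt t \<bullet> A (nt t)) + (c t)\<^sup>2 * (nt t \<bullet> nt t)"
      unfolding power2_norm_eq_inner by (simp add: inner_diff_left inner_diff_right inner_commute algebra_simps power2_eq_square)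
    also have "\<dots> = m * c t - (c t)\<^sup>2"
      using elim key[of "nt t"] by (simp add: c_def power2_eq_square norm_eq_1[symmetric] algebra_simps)
    finally show ?case unfolding R_def by (simp add: real_sqrt_unique)
  qed
  show ?thesis
  proof (rule Lim_null_comparison)
    show "((\<lambda>t. 2 * E t + R t) \<longlongrightarrow> 0) F" using tendsto_add[OF tendsto_mult_right_zero[OF El, of 2] Rl] by simp
    show "\<forall>\<^sub>F t in F. norm (norm (Ht t (nt t) - (nt t \<bullet> Ht t (nt t)) *\<^sub>R nt t)) \<le> 2 * E t + R t"
      using Eb Rb unit
    proof eventually_elim
      case (elim t)
      have eq: "Ht t (nt t) - (nt t \<bullet> Ht t (nt t)) *\<^sub>R nt t =
        (Ht t (nt t) - A (nt t)) + (A (nt t) - c t *\<^sub>R nt t) + (c t - nt t \<bullet> Ht t (nt t)) *\<^sub>R nt t"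
        by (simp add: algebra_simps)
      have n3: "norm ((c t - nt t \<bullet> Ht t (nt t)) *\<^sub>R nt t) \<le> E t"
      proof -
        have "c t - nt t \<bullet> Ht t (nt t) = nt t \<bullet> (A (nt t) - Ht t (nt t))" by (simp add: c_def inner_diff_right)
        also have "\<bar>\<dots>\<bar> \<le> norm (nt t) * norm (A (nt t) - Ht t (nt t))"
          by (rule Cauchy_Schwarz_ineq2)
        also have "\<dots> = norm (Ht t (nt t) - A (nt t))" using elim by (simp add: norm_minus_commute)
        finally show ?thesis using elim by simp
      qed
      have "norm (Ht t (nt t) - (nt t \<bullet> Ht t (nt t)) *\<^sub>R nt t) \<le>
         norm (Ht t (nt t) - A (nt t)) + norm (A (nt t) - c t *\<^sub>R nt t) + norm ((c t - nt t \<bullet> Ht t (nt t)) *\<^sub>R nt t)"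
        unfolding eq by (meson norm_triangle_le order_refl add_mono)
      then show ?case using elim n3 by simp
    qed
  qed
qed

lemma integral_lim:
  fixes G :: "real \<Rightarrow> real"
  assumes \<Lambda>: "\<Lambda> > 1" and L: "L > 0"
   and nn: "\<And>t. 0 \<le> G t"
   and bound: "\<And>\<epsilon>. \<epsilon> > 0 \<Longrightarrow> \<exists>\<delta>>0. \<forall>t. 0 < t \<and> t < \<delta> \<longrightarrow> G t \<le> \<epsilon> / t"
   and cont: "continuous_on {0<..<L} G"
  shows "((\<lambda>s. integral {s..\<Lambda> * s} G) \<longlongrightarrow> 0) (at_right 0)"
proof (rule tendstoI)
  fix \<epsilon> :: real assume e: "\<epsilon> > 0"
  have lnL: "ln \<Lambda> > 0" using \<Lambda> by simp
  define e' where "e' = \<epsilon> / (2 * ln \<Lambda>)"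
  have e': "e' > 0" using e lnL by (simp add: e'_def)
  obtain \<delta> where d: "\<delta> > 0" "\<And>t. 0 < t \<Longrightarrow> t < \<delta> \<Longrightarrow> G t \<le> e' / t" using bound[OF e'] by blast
  define b where "b = min \<delta> L / \<Lambda>"
  have b: "b > 0" using d L \<Lambda> by (simp add: b_def)
  have "\<forall>\<^sub>F s in at_right 0. 0 < s \<and> s < b"
    unfolding eventually_at_right_field using b by auto
  then show "\<forall>\<^sub>F s in at_right 0. dist (integral {s..\<Lambda> * s} G) 0 < \<epsilon>"
  proof eventually_elim
    case (elim s)
    have s: "0 < s" "s < b" using elim by auto
    have sL: "\<Lambda> * s < min \<delta> L" using s \<Lambda> unfolding b_def by (simp add: field_simps)
    have sub: "{s..\<Lambda> * s} \<subseteq> {0<..<L}" using s sL by auto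
    have le: "s \<le> \<Lambda> * s" using s \<Lambda> by simp
    have iG: "G integrable_on {s..\<Lambda> * s}"
      by (rule integrable_continuous_interval[OF continuous_on_subset[OF cont sub]])
    have hi: "((\<lambda>t. e' / t) has_integral (e' * ln (\<Lambda> * s) - e' * ln s)) {s..\<Lambda> * s}"
    proof (rule fundamental_theorem_of_calculus[OF le])
      fix t assume t: "t \<in> {s..\<Lambda> * s}"
      then have "t > 0" using s by auto
      then have "((\<lambda>t. e' * ln t) has_real_derivative e' / t) (at t within {s..\<Lambda> * s})"
        by (auto intro!: derivative_eq_intros simp: field_simps)
      then show "((\<lambda>t. e' * ln t) has_vector_derivative e' / t) (at t within {s..\<Lambda> * s})"
        by (simp add: has_real_derivative_iff_has_vector_derivative)
    qed
    have lnv: "e' * ln (\<Lambda> * s) - e' * ln s = \<epsilon> / 2"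
    proof -
      have "ln (\<Lambda> * s) = ln \<Lambda> + ln s" using s \<Lambda> by (simp add: ln_mult)
      then have "e' * ln (\<Lambda> * s) - e' * ln s = e' * ln \<Lambda>" by (simp add: algebra_simps)
      then show ?thesis using lnL by (simp add: e'_def)
    qed
    have "integral {s..\<Lambda> * s} G \<le> integral {s..\<Lambda> * s} (\<lambda>t. e' / t)"
    proof (rule integral_le[OF iG])
      show "(\<lambda>t. e' / t) integrable_on {s..\<Lambda> * s}" using hi by blast
      fix t assume t: "t \<in> {s..\<Lambda> * s}"
      show "G t \<le> e' / t" using d(2)[of t] t s sL by auto
    qed
    also have "\<dots> = \<epsilon> / 2" using hi lnv by (simp add: integral_unique)
    finally have up: "integral {s..\<Lambda> * s} G \<le> \<epsilon> / 2" .
    have "0 \<le> integral {s..\<Lambda> * s} G"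
      by (rule Henstock_Kurzweil_Integration.integral_nonneg[OF iG nn])
    then show ?case using up e by (simp add: dist_real_def)
  qed
qed

lemma mvt0:
  fixes f f' :: "real \<Rightarrow> real"
  assumes t: "0 < t" and c: "continuous_on {0..t} f" and d: "\<And>x. 0 < x \<Longrightarrow> x < t \<Longrightarrow> DERIV f x :> f' x"
  shows "\<exists>z. 0 < z \<and> z < t \<and> f t - f 0 = t * f' z"
proof -
  have "\<And>x. 0 < x \<Longrightarrow> x < t \<Longrightarrow> f differentiable (at x)"
    using d real_differentiable_def by blast
  from MVT[OF t c this] obtain l z where z: "0 < z" "z < t" "DERIV f z :> l" "f t - f 0 = (t - 0) * l" by blast
  have "l = f' z" using DERIV_unique[OF z(3) d[OF z(1,2)]] .
  then show ?thesis using z by auto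
qed

lemma core:
  fixes g :: "'a::euclidean_space \<Rightarrow> 'a" and H :: "'a \<Rightarrow> 'a \<Rightarrow> 'a" and \<gamma> :: "real \<Rightarrow> 'a"
  assumes U: "open U" "\<Omega> \<subseteq> U"
   and gd: "\<And>y. y\<in>U \<Longrightarrow> (g has_derivative H y) (at y)"
   and Hc: "\<And>v. continuous_on U (\<lambda>y. H y v)"
   and Hsym: "\<And>y v w. y\<in>U \<Longrightarrow> H y v \<bullet> w = H y w \<bullet> v"
   and pde: "\<And>y. y\<in>\<Omega> \<Longrightarrow> g y \<noteq> 0 \<Longrightarrow>
      (g y /\<^sub>R norm (g y)) \<bullet> H y (g y /\<^sub>R norm (g y)) = (\<Sum>i\<in>Basis. H y i \<bullet> i) + 1"
   and W: "open W" "W \<noteq> {}" "\<And>v. v\<in>W \<Longrightarrow> \<forall>\<^sub>F \<tau> in at_right 0. \<gamma> 0 + \<tau> *\<^sub>R v \<in> \<Omega>"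
   and L: "L > 0" "continuous_on {0..L} \<gamma>" "\<gamma> 0 \<in> \<Omega>" "g (\<gamma> 0) = 0"
   and curve: "\<forall>s\<in>{0<..L}. \<gamma> s \<in> \<Omega> \<and> g (\<gamma> s) \<noteq> 0 \<and>
           (\<gamma> has_vector_derivative - (g (\<gamma> s) /\<^sub>R norm (g (\<gamma> s)))) (at s within {0..L})"
   and \<Lambda>: "\<Lambda> > 1"
  shows "((\<lambda>s. integral {s..\<Lambda> * s}
            (\<lambda>t. norm (vector_derivative (\<lambda>r. vector_derivative \<gamma> (at r)) (at t))))
          \<longlongrightarrow> 0) (at_right 0)"
proof -
  define x0 where "x0 = \<gamma> 0"
  define A where "A = H x0"
  define tr where "tr y = (\<Sum>i\<in>Basis. H y i \<bullet> i)" for y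
  define m where "m = tr x0 + 1"
  define F where "F y = g y /\<^sub>R norm (g y)" for y
  have x0U: "x0 \<in> U" using L U by (auto simp: x0_def)
  have lH: "\<And>y. y\<in>U \<Longrightarrow> linear (H y)" using gd has_derivative_linear by blast
  have lA: "linear A" unfolding A_def using lH x0U by blast
  have symA: "\<And>v w. A v \<bullet> w = A w \<bullet> v" using Hsym x0U by (simp add: A_def)
  obtain v0 where v0: "v0 \<in> W" using W(2) by blast
  have qW: "A v \<bullet> A (A v) = m * (A v \<bullet> A v)" if "v \<in> W" for v
    using W_quad[OF U(1) x0U gd Hc pde L(4)[folded x0_def] W(3)[OF that, folded x0_def]]
    unfolding A_def m_def tr_def by blast
  have qall: "\<And>d. A d \<bullet> A (A d) = m * (A d \<bullet> A d)"
    by (rule quad_open_zero[OF lA W(1) v0 qW])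
  have AA: "\<And>x. A (A x) = m *\<^sub>R A x" by (rule sym_alg[OF lA symA qall])
  have key: "A n \<bullet> A n = m * (n \<bullet> A n)" for n
  proof -
    have "A n \<bullet> A n = A (A n) \<bullet> n" using symA[of "A n" n] by simp
    also have "\<dots> = m * (A n \<bullet> n)" by (simp add: AA)
    finally show ?thesis by (simp add: inner_commute)
  qed
  have \<gamma>\<Omega>: "\<gamma> t \<in> \<Omega> \<and> g (\<gamma> t) \<noteq> 0" if "0 < t" "t \<le> L" for t using curve that by auto
  have \<gamma>U: "\<gamma> t \<in> U" if "0 \<le> t" "t \<le> L" for t
    using \<gamma>\<Omega>[of t] that L(3) U(2) by (cases "t = 0") auto
  have \<gamma>d: "(\<gamma> has_vector_derivative - F (\<gamma> t)) (at t)" if "0 < t" "t < L" for t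
  proof -
    have "(\<gamma> has_vector_derivative - F (\<gamma> t)) (at t within {0..L})" using curve that by (auto simp: F_def)
    moreover have "t \<in> interior {0..L}" using that by simp
    ultimately show ?thesis using at_within_interior by metis
  qed
  have gcont: "continuous_on U g"
    using gd has_derivative_continuous U(1) by (metis continuous_at_imp_continuous_on)
  have \<gamma>l: "(\<gamma> \<longlongrightarrow> x0) (at_right 0)"
  proof -
    have "(\<gamma> \<longlongrightarrow> \<gamma> 0) (at 0 within {0..L})" using L(2) L(1) unfolding continuous_on_def by auto
    then show ?thesis using at_within_Icc_at_right[OF L(1)] by (simp add: x0_def)
  qed
  have \<gamma>ev: "\<forall>\<^sub>F t in at_right 0. 0 < t \<and> t < L"
    unfolding eventually_at_right_field using L(1) by auto
  have \<gamma>evU: "\<forall>\<^sub>F t in at_right 0. \<gamma> t \<in> U"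
    using \<gamma>ev by eventually_elim (use \<gamma>U in auto)
  have Hl: "((\<lambda>t. H (\<gamma> t) i) \<longlongrightarrow> A i) (at_right 0)" for i
    unfolding A_def by (rule continuous_on_tendsto_compose[OF Hc \<gamma>l x0U \<gamma>evU])
  have trl: "((\<lambda>t. tr (\<gamma> t) + 1) \<longlongrightarrow> m) (at_right 0)"
    unfolding m_def tr_def A_def[symmetric] by (intro tendsto_intros Hl)
  have pde': "F (\<gamma> t) \<bullet> H (\<gamma> t) (F (\<gamma> t)) = tr (\<gamma> t) + 1" if "0 < t" "t \<le> L" for t
    using pde[of "\<gamma> t"] \<gamma>\<Omega>[OF that] unfolding F_def tr_def by blast
  define lam where "lam t = norm (g (\<gamma> t))" for t
  have lamd: "DERIV lam t :> - (tr (\<gamma> t) + 1)" if t: "0 < t" "t < L" for t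
  proof -
    define y where "y = \<gamma> t"
    have yU: "y \<in> U" and gnz: "g y \<noteq> 0" using \<gamma>U[of t] \<gamma>\<Omega>[of t] t by (auto simp: y_def)
    have d1: "(\<gamma> has_derivative (\<lambda>h. h *\<^sub>R - F y)) (at t)"
      using \<gamma>d[OF t] unfolding has_vector_derivative_def y_def .
    have d2: "(g has_derivative H y) (at (\<gamma> t))" using gd[OF yU] unfolding y_def .
    have d3: "((\<lambda>t. g (\<gamma> t)) has_derivative (\<lambda>h. H y (h *\<^sub>R - F y))) (at t)"
      using has_derivative_compose[OF d1 d2] by simp
    have d4: "(lam has_derivative (\<lambda>h. (g y /\<^sub>R norm (g y)) \<bullet> H y (h *\<^sub>R - F y))) (at t)"
      unfolding lam_def using norm_comp_deriv[OF d3] gnz by (simp add: y_def)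
    have gF: "g y /\<^sub>R norm (g y) = F y" by (simp add: F_def)
    have p: "F y \<bullet> H y (F y) = tr y + 1" using pde'[of t] t unfolding y_def by simp
    have "(\<lambda>h. (g y /\<^sub>R norm (g y)) \<bullet> H y (h *\<^sub>R - F y)) = (\<lambda>h. h * (- (tr y + 1)))"
    proof
      fix h :: real
      have "H y (h *\<^sub>R - F y) = - (h *\<^sub>R H y (F y))" using lH[OF yU] by (simp add: linear_scale linear_neg)
      then show "(g y /\<^sub>R norm (g y)) \<bullet> H y (h *\<^sub>R - F y) = h * (- (tr y + 1))"
        unfolding gF by (simp add: p algebra_simps)
    qed
    with d4 show ?thesis unfolding y_def
      by (intro has_derivative_imp_has_field_derivative) (auto simp: mult.commute)
  qed
  have lamc: "continuous_on {0..L} lam"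
  proof -
    have "continuous_on {0..L} (\<lambda>t. g (\<gamma> t))"
      by (rule continuous_on_compose2[OF gcont L(2)]) (use \<gamma>U in auto)
    then show ?thesis unfolding lam_def by (intro continuous_intros)
  qed
  have lam0: "lam 0 = 0" using L(4) by (simp add: lam_def)
  have lampos: "lam t > 0" if "0 < t" "t \<le> L" for t using \<gamma>\<Omega>[OF that] by (simp add: lam_def)
  have mnz: "m \<noteq> 0"
  proof
    assume m0: "m = 0"
    have "A n = 0" for n using key[of n] m0 by simp
    then have "tr x0 = 0" by (simp add: tr_def A_def[symmetric])
    then show False using m0 by (simp add: m_def)
  qed
  have mneg: "m < 0"
  proof (rule ccontr)
    assume "\<not> m < 0"
    then have mp: "m > 0" using mnz by simp
    have "\<forall>\<^sub>F t in at_right 0. 0 < tr (\<gamma> t) + 1" using order_tendstoD(1)[OF trl mp] .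
    then obtain b where b: "b > 0" "\<And>t. 0 < t \<Longrightarrow> t < b \<Longrightarrow> 0 < tr (\<gamma> t) + 1"
      unfolding eventually_at_right_field by auto
    define t1 where "t1 = min b L / 2"
    have t1: "0 < t1" "t1 < b" "t1 < L" using b L(1) by (auto simp: t1_def)
    obtain z where z: "0 < z" "z < t1" "lam t1 - lam 0 = t1 * (- (tr (\<gamma> z) + 1))"
      using mvt0[OF t1(1), of lam "\<lambda>z. - (tr (\<gamma> z) + 1)"] continuous_on_subset[OF lamc, of "{0..t1}"] t1 lamd
      by auto
    have "0 < tr (\<gamma> z) + 1" using b(2)[of z] z t1 by auto
    then have "lam t1 < 0" using z t1 lam0 by (simp add: mult_pos_neg)
    then show False using lampos[of t1] t1 by simp
  qed
  define a where "a = - m"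
  have a: "a > 0" using mneg by (simp add: a_def)
  obtain b where b: "b > 0" "b \<le> L" "\<And>t. 0 < t \<Longrightarrow> t < b \<Longrightarrow> (a / 2) * t \<le> lam t"
  proof -
    have "m < m / 2" using mneg by simp
    have "\<forall>\<^sub>F t in at_right 0. tr (\<gamma> t) + 1 < m / 2" using order_tendstoD(2)[OF trl \<open>m < m / 2\<close>] .
    then obtain b0 where b0: "b0 > 0" "\<And>t. 0 < t \<Longrightarrow> t < b0 \<Longrightarrow> tr (\<gamma> t) + 1 < m / 2"
      unfolding eventually_at_right_field by auto
    show ?thesis
    proof (rule that[of "min b0 L"])
      show "min b0 L > 0" "min b0 L \<le> L" using b0 L(1) by auto
      fix t assume t: "0 < t" "t < min b0 L"
      obtain z where z: "0 < z" "z < t" "lam t - lam 0 = t * (- (tr (\<gamma> z) + 1))"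
        using mvt0[OF t(1), of lam "\<lambda>z. - (tr (\<gamma> z) + 1)"] continuous_on_subset[OF lamc, of "{0..t}"] t lamd
        by auto
      have "- (tr (\<gamma> z) + 1) > a / 2" using b0(2)[of z] z t by (simp add: a_def)
      then show "(a / 2) * t \<le> lam t" using z t lam0 by (simp add: mult.commute mult_left_mono)
    qed
  qed
  define Gv where "Gv y = (H y (F y) - (F y \<bullet> H y (F y)) *\<^sub>R F y) /\<^sub>R norm (g y)" for y
  have gdd: "vector_derivative (\<lambda>r. vector_derivative \<gamma> (at r)) (at t) = Gv (\<gamma> t)"
    if t: "0 < t" "t < L" for t
  proof -
    define y where "y = \<gamma> t"
    have yU: "y \<in> U" and gnz: "g y \<noteq> 0" using \<gamma>U[of t] \<gamma>\<Omega>[of t] t by (auto simp: y_def)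
    define DF where "DF v = (H y v - (F y \<bullet> H y v) *\<^sub>R F y) /\<^sub>R norm (g y)" for v
    have Fd: "(F has_derivative DF) (at y)"
      using F_deriv[OF gd[OF yU] gnz] unfolding DF_def[abs_def] F_def[abs_def] by simp
    have lDF: "linear DF" using Fd has_derivative_linear by blast
    have d1: "(\<gamma> has_derivative (\<lambda>h. h *\<^sub>R - F y)) (at t)"
      using \<gamma>d[OF t] unfolding has_vector_derivative_def y_def .
    have "((\<lambda>r. F (\<gamma> r)) has_derivative (\<lambda>h. DF (h *\<^sub>R - F y))) (at t)"
      using has_derivative_compose[OF d1 Fd[unfolded y_def]] unfolding y_def by simp
    then have "((\<lambda>r. - F (\<gamma> r)) has_derivative (\<lambda>h. - DF (h *\<^sub>R - F y))) (at t)"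
      by (rule has_derivative_minus)
    moreover have "(\<lambda>h. - DF (h *\<^sub>R - F y)) = (\<lambda>h. h *\<^sub>R Gv y)"
    proof
      fix h :: real
      have "DF (h *\<^sub>R - F y) = - (h *\<^sub>R DF (F y))" using lDF by (simp add: linear_scale linear_neg)
      moreover have "DF (F y) = Gv y" by (simp add: DF_def Gv_def)
      ultimately show "- DF (h *\<^sub>R - F y) = h *\<^sub>R Gv y" by simp
    qed
    ultimately have "((\<lambda>r. - F (\<gamma> r)) has_vector_derivative Gv y) (at t)"
      unfolding has_vector_derivative_def by simp
    then have "((\<lambda>r. vector_derivative \<gamma> (at r)) has_vector_derivative Gv y) (at t)"
    proof (rule has_vector_derivative_transform_within_open[of _ _ _ "{0<..<L}"])
      show "open {0<..<L}" by simp
      show "t \<in> {0<..<L}" using t by simp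
      fix r :: real assume "r \<in> {0<..<L}"
      then show "- F (\<gamma> r) = vector_derivative \<gamma> (at r)"
        using vector_derivative_at[OF \<gamma>d[of r]] by simp
    qed
    then show ?thesis using vector_derivative_at unfolding y_def by blast
  qed
  have kl: "((\<lambda>t. norm (H (\<gamma> t) (F (\<gamma> t)) - (F (\<gamma> t) \<bullet> H (\<gamma> t) (F (\<gamma> t))) *\<^sub>R F (\<gamma> t))) \<longlongrightarrow> 0) (at_right 0)"
  proof (rule kappa_lim[OF lA key _ Hl _ _ trl])
    show "\<forall>\<^sub>F t in at_right 0. linear (H (\<gamma> t))" using \<gamma>evU by eventually_elim (rule lH)
    show "\<forall>\<^sub>F t in at_right 0. norm (F (\<gamma> t)) = 1"
      using \<gamma>ev by eventually_elim (use \<gamma>\<Omega> in \<open>auto simp: F_def\<close>)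
    show "\<forall>\<^sub>F t in at_right 0. F (\<gamma> t) \<bullet> H (\<gamma> t) (F (\<gamma> t)) = tr (\<gamma> t) + 1"
      using \<gamma>ev by eventually_elim (use pde' in auto)
  qed
  have bound: "\<exists>\<delta>>0. \<forall>t. 0 < t \<and> t < \<delta> \<longrightarrow>
      norm (vector_derivative (\<lambda>r. vector_derivative \<gamma> (at r)) (at t)) \<le> \<epsilon> / t" if e: "\<epsilon> > 0" for \<epsilon>
  proof -
    have "0 < \<epsilon> * (a / 2)" using e a by simp
    from order_tendstoD(2)[OF kl this]
    obtain b1 where b1: "b1 > 0" "\<And>t. 0 < t \<Longrightarrow> t < b1 \<Longrightarrow>
        norm (H (\<gamma> t) (F (\<gamma> t)) - (F (\<gamma> t) \<bullet> H (\<gamma> t) (F (\<gamma> t))) *\<^sub>R F (\<gamma> t)) < \<epsilon> * (a / 2)"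
      unfolding eventually_at_right_field by auto
    show ?thesis
    proof (intro exI[of _ "min b1 b"] conjI allI impI)
      show "min b1 b > 0" using b1 b by simp
      fix t assume t: "0 < t \<and> t < min b1 b"
      then have tL: "0 < t" "t < L" using b by auto
      have lp: "lam t > 0" using lampos[of t] tL by simp
      have "norm (vector_derivative (\<lambda>r. vector_derivative \<gamma> (at r)) (at t)) = norm (Gv (\<gamma> t))"
        using gdd[OF tL] by simp
      also have "\<dots> = norm (H (\<gamma> t) (F (\<gamma> t)) - (F (\<gamma> t) \<bullet> H (\<gamma> t) (F (\<gamma> t))) *\<^sub>R F (\<gamma> t)) / lam t"
        unfolding Gv_def lam_def by (simp add: divide_inverse_commute)
      also have "\<dots> \<le> (\<epsilon> * (a / 2)) / ((a / 2) * t)"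
      proof (rule frac_le)
        show "0 \<le> \<epsilon> * (a / 2)" using e a by simp
        show "norm (H (\<gamma> t) (F (\<gamma> t)) - (F (\<gamma> t) \<bullet> H (\<gamma> t) (F (\<gamma> t))) *\<^sub>R F (\<gamma> t)) \<le> \<epsilon> * (a / 2)"
          using b1(2)[of t] t by simp
        show "0 < (a / 2) * t" using a t by simp
        show "(a / 2) * t \<le> lam t" using b(3)[of t] t by simp
      qed
      also have "\<dots> = \<epsilon> / t" using a by (simp add: field_simps)
      finally show "norm (vector_derivative (\<lambda>r. vector_derivative \<gamma> (at r)) (at t)) \<le> \<epsilon> / t" .
    qed
  qed
  have cont: "continuous_on {0<..<L} (\<lambda>t. norm (vector_derivative (\<lambda>r. vector_derivative \<gamma> (at r)) (at t)))"
  proof -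
    have gc: "continuous_on {0<..<L} \<gamma>" by (rule continuous_on_subset[OF L(2)]) auto
    have imU: "\<gamma> ` {0<..<L} \<subseteq> U" using \<gamma>U by auto
    have c1: "continuous_on {0<..<L} (\<lambda>t. H (\<gamma> t) i)" for i
      by (rule continuous_on_compose2[OF Hc gc imU])
    have c2: "continuous_on {0<..<L} (\<lambda>t. g (\<gamma> t))"
      by (rule continuous_on_compose2[OF gcont gc imU])
    have nz: "\<forall>t\<in>{0<..<L}. norm (g (\<gamma> t)) \<noteq> 0" using \<gamma>\<Omega> by auto
    have c3: "continuous_on {0<..<L} (\<lambda>t. F (\<gamma> t))"
      unfolding F_def using nz by (intro continuous_intros c2) auto
    have c4: "continuous_on {0<..<L} (\<lambda>t. \<Sum>i\<in>Basis. (F (\<gamma> t) \<bullet> i) *\<^sub>R H (\<gamma> t) i)"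
      by (intro continuous_intros c1 c3)
    have c5: "continuous_on {0<..<L} (\<lambda>t. H (\<gamma> t) (F (\<gamma> t)))"
    proof (rule continuous_on_eq[OF c4])
      fix t assume "t \<in> {0<..<L}"
      then have "\<gamma> t \<in> U" using imU by auto
      then show "(\<Sum>i\<in>Basis. (F (\<gamma> t) \<bullet> i) *\<^sub>R H (\<gamma> t) i) = H (\<gamma> t) (F (\<gamma> t))"
        using lin_expand[OF lH] by metis
    qed
    have "continuous_on {0<..<L} (\<lambda>t. norm (Gv (\<gamma> t)))"
      unfolding Gv_def using nz by (intro continuous_intros c2 c3 c5) auto
    then show ?thesis by (rule continuous_on_eq) (use gdd in auto)
  qed
  show ?thesis by (rule integral_lim[OF \<Lambda> L(1) _ bound cont]) simp
qed

theorem lemma4p4: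
  fixes \<Omega> :: "'a::euclidean_space set" and u :: "'a \<Rightarrow> real"
    and \<gamma> :: "real \<Rightarrow> 'a" and L \<Lambda> :: real
  assumes "compact \<Omega>" and "connected \<Omega>"
    and "smooth_mean_convex_boundary \<Omega>"
    and "\<exists>U. \<Omega> \<subseteq> U \<and> C2_on U u"
    and "\<forall>x\<in>\<Omega>. grad u x \<noteq> 0 \<longrightarrow>
           -1 = norm (grad u x) * divergence (\<lambda>y. grad u y /\<^sub>R norm (grad u y)) x"
    and "\<exists>c. \<forall>x\<in>frontier \<Omega>. u x = c"
    and "Sup (u ` \<Omega>) = 0"
    and "L > 0" and "continuous_on {0..L} \<gamma>"
    and "\<gamma> 0 \<in> \<Omega>" and "grad u (\<gamma> 0) = 0"
    and "\<forall>s\<in>{0<..L}. \<gamma> s \<in> \<Omega> \<and> grad u (\<gamma> s) \<noteq> 0 \<and>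
           (\<gamma> has_vector_derivative - (grad u (\<gamma> s) /\<^sub>R norm (grad u (\<gamma> s)))) (at s within {0..L})"
    and "\<Lambda> > 1"
  shows "((\<lambda>s. integral {s..\<Lambda> * s}
            (\<lambda>t. norm (vector_derivative (\<lambda>r. vector_derivative \<gamma> (at r)) (at t))))
          \<longlongrightarrow> 0) (at_right 0)"
proof -
  obtain U where U: "\<Omega> \<subseteq> U" "C2_on U u" using assms(4) by blast
  have oU: "open U" using U(2) by (simp add: C2_on_def)
  have gd: "\<And>y. y\<in>U \<Longrightarrow> (grad u has_derivative hess u y) (at y)" by (rule C2_grad_deriv[OF U(2)])
  have Hc: "\<And>v. continuous_on U (\<lambda>y. hess u y v)" by (rule C2_hess_cont[OF U(2)])
  have Hsym: "\<And>y v w. y\<in>U \<Longrightarrow> hess u y v \<bullet> w = hess u y w \<bullet> v"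
    by (rule clairaut[OF oU _ C2_u_deriv[OF U(2)] gd Hc])
  have pde: "(grad u y /\<^sub>R norm (grad u y)) \<bullet> hess u y (grad u y /\<^sub>R norm (grad u y)) =
      (\<Sum>i\<in>Basis. hess u y i \<bullet> i) + 1" if y: "y \<in> \<Omega>" "grad u y \<noteq> 0" for y
  proof -
    have yU: "y \<in> U" using y U by auto
    have "-1 = norm (grad u y) * divergence (\<lambda>y. grad u y /\<^sub>R norm (grad u y)) y" using assms(5) y by blast
    also have "\<dots> = (\<Sum>i\<in>Basis. hess u y i \<bullet> i) - (grad u y /\<^sub>R norm (grad u y)) \<bullet> hess u y (grad u y /\<^sub>R norm (grad u y))"
      unfolding div_formula[OF gd[OF yU] y(2)] using y(2) by simp
    finally show ?thesis by linarith
  qed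
  have "\<exists>W. open W \<and> W \<noteq> {} \<and> (\<forall>v\<in>W. \<forall>\<^sub>F \<tau> in at_right 0. \<gamma> 0 + \<tau> *\<^sub>R v \<in> \<Omega>)"
  proof (cases "\<gamma> 0 \<in> interior \<Omega>")
    case True
    show ?thesis
    proof (intro exI[of _ UNIV] conjI ballI)
      fix v :: 'a
      have "((\<lambda>\<tau>. \<gamma> 0 + \<tau> *\<^sub>R v) \<longlongrightarrow> \<gamma> 0 + 0 *\<^sub>R v) (at_right 0)" by (intro tendsto_intros)
      then have "((\<lambda>\<tau>. \<gamma> 0 + \<tau> *\<^sub>R v) \<longlongrightarrow> \<gamma> 0) (at_right 0)" by simp
      from topological_tendstoD[OF this open_interior True]
      show "\<forall>\<^sub>F \<tau> in at_right 0. \<gamma> 0 + \<tau> *\<^sub>R v \<in> \<Omega>"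
        by eventually_elim (use interior_subset in blast)
    qed auto
  next
    case False
    define x0 where "x0 = \<gamma> 0"
    have x0: "x0 \<in> \<Omega>" "x0 \<notin> interior \<Omega>" using False assms(10) by (auto simp: x0_def)
    then have fr: "x0 \<in> frontier \<Omega>" unfolding frontier_def using closure_subset by blast
    obtain U' \<phi> where B: "open U'" "frontier \<Omega> \<subseteq> U'" "smooth_on U' \<phi>" "\<Omega> \<inter> U' = {x\<in>U'. \<phi> x \<le> 0}"
      "\<forall>x\<in>frontier \<Omega>. grad \<phi> x \<noteq> 0"
      using assms(3) unfolding smooth_mean_convex_boundary_def by blast
    have x0U': "x0 \<in> U'" using fr B(2) by blast
    have "dderivs [] \<phi> differentiable (at x0)" using B(3) x0U' unfolding smooth_on_def by blast
    then have pd: "(\<phi> has_derivative (\<lambda>v. grad \<phi> x0 \<bullet> v)) (at x0)" by (intro grad_deriv_diff) simp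
    have gnz: "grad \<phi> x0 \<noteq> 0" using B(5) fr by blast
    have phi0: "\<phi> x0 \<le> 0" using B(4) x0 x0U' by blast
    show ?thesis
    proof (intro exI[of _ "{v. grad \<phi> x0 \<bullet> v < 0}"] conjI ballI)
      show "open {v. grad \<phi> x0 \<bullet> v < 0}" by (rule open_halfspace_lt)
      have "- grad \<phi> x0 \<in> {v. grad \<phi> x0 \<bullet> v < 0}" using gnz by simp
      then show "{v. grad \<phi> x0 \<bullet> v < 0} \<noteq> {}" by blast
      fix v assume v: "v \<in> {v. grad \<phi> x0 \<bullet> v < 0}"
      have "(\<phi> has_derivative (\<lambda>v. grad \<phi> x0 \<bullet> v)) (at (x0 + 0 *\<^sub>R v))" using pd by simp
      from line_deriv_f[OF this]
      have "DERIV (\<lambda>t. \<phi> (x0 + t *\<^sub>R v)) 0 :> grad \<phi> x0 \<bullet> v" .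
      from DERIV_neg_dec_right[OF this] v
      obtain d where d: "d > 0" "\<And>h. h > 0 \<Longrightarrow> h < d \<Longrightarrow> \<phi> (x0 + h *\<^sub>R v) < \<phi> x0" by auto
      have ev1: "\<forall>\<^sub>F \<tau> in at_right 0. \<phi> (x0 + \<tau> *\<^sub>R v) < \<phi> x0"
        unfolding eventually_at_right_field using d by auto
      have "((\<lambda>\<tau>. x0 + \<tau> *\<^sub>R v) \<longlongrightarrow> x0 + 0 *\<^sub>R v) (at_right 0)" by (intro tendsto_intros)
      then have "((\<lambda>\<tau>. x0 + \<tau> *\<^sub>R v) \<longlongrightarrow> x0) (at_right 0)" by simp
      from topological_tendstoD[OF this B(1) x0U']
      have ev2: "\<forall>\<^sub>F \<tau> in at_right 0. x0 + \<tau> *\<^sub>R v \<in> U'" .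
      show "\<forall>\<^sub>F \<tau> in at_right 0. \<gamma> 0 + \<tau> *\<^sub>R v \<in> \<Omega>"
        using ev1 ev2
      proof eventually_elim
        case (elim \<tau>)
        then have "x0 + \<tau> *\<^sub>R v \<in> \<Omega> \<inter> U'" using B(4) phi0 by auto
        then show ?case by (simp add: x0_def)
      qed
    qed
  qed
  then obtain W where W: "open W" "W \<noteq> {}" "\<And>v. v\<in>W \<Longrightarrow> \<forall>\<^sub>F \<tau> in at_right 0. \<gamma> 0 + \<tau> *\<^sub>R v \<in> \<Omega>"
    by blast
  show ?thesis
    by (rule core[OF oU U(1) gd Hc Hsym pde W assms(8,9,10,11,12,13)])
qed

end
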